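(* Let $L$ be a positive integer, let $r$ be a positive integer with $\mathrm{degree}(r) < L$, and let $p = 2^L \oplus r$. For every positive integer $w$, the degree of $w \star 2^L \bmod p$ is at most $\mathrm{degree}(w) + \mathrm{degree}(r)$. Moreover, if $\mathrm{degree}(w) + \mathrm{degree}(r) < L$, then the degree of $w \star 2^L \bmod p$ is exactly $\mathrm{degree}(w) + \mathrm{degree}(r)$.
   Context: All operations are carry-less. For nonnegative integers $a,b$, with $a_i$ the $i$-th least significant bit of $a$, the carry-less product $a \star b$ is the integer whose $i$-th bit is $\bigoplus_{k=0}^{i} a_{i-k} b_k$; $\oplus$ is bitwise XOR. For a positive integer $x$, $\mathrm{degree}(x)$ is the index (starting at $0$) of its most significant nonzero bit; by convention $\mathrm{degree}(0) = -\infty$. For integers $a$ and $b \neq 0$ there are unique integers $\alpha,\beta$ with $a = \alpha \star b \oplus \beta$ and $\beta = 0$ or $\mathrm{degree}(\beta) < \mathrm{degree}(b)$; one writes $a \div b = \alpha$ and $a \bmod b = \beta$. Precedence: $\star$, $\bmod$, $\div$ first, then $\oplus$. *)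

theory Defs
  imports Main
begin

text \<open>Carry-less product: bit i of clmul a b is XOR over k \<le> i of a_(i-k) AND b_k.
  Only bits below the sum of the bit lengths can be nonzero, so a finite sum suffices.\<close>
definition clmul :: "nat \<Rightarrow> nat \<Rightarrow> nat" where
  "clmul a b = (\<Sum>i < Suc (a + b).
      (if odd (card {k. k \<le> i \<and> bit a (i - k) \<and> bit b k}) then 2 ^ i else 0))"

text \<open>Degree of a positive integer: index of its most significant set bit
  (only meaningful for x > 0; the value at 0 is irrelevant and always guarded).\<close>
definition cl_degree :: "nat \<Rightarrow> nat" where
  "cl_degree x = Max {i. bit x i}"

definition cl_mod :: "nat \<Rightarrow> nat \<Rightarrow> nat" where
  "cl_mod a b = (THE \<beta>. \<exists>\<alpha>. a = xor (clmul \<alpha> b) \<beta> \<and> (\<beta> = 0 \<or> cl_degree \<beta> < cl_degree b))"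

end

theory Submission
  imports Defs "HOL-Library.Z2" "HOL-Computational_Algebra.Polynomial"
begin

lemma bit_imp_lt: "bit (a::nat) n \<Longrightarrow> n < a"
proof -
  assume "bit a n"
  then have "odd (a div 2^n)" by (simp add: bit_iff_odd)
  then have "a div 2^n \<noteq> 0" by (metis even_zero)
  then have "2^n \<le> a" by (simp add: div_eq_0_iff) 
  moreover have "n < 2^n" by simp
  ultimately show ?thesis by linarith
qed

definition toP :: "nat \<Rightarrow> bit poly" where
  "toP n = Poly (map (\<lambda>i. of_bool (bit n i)) [0..<n])"

lemma coeff_toP: "coeff (toP n) i = of_bool (bit n i)"
proof (cases "i < n")
  case True then show ?thesis by (simp add: toP_def nth_default_def)
next
  case False then have "\<not> bit n i" using bit_imp_lt by fastforce
  then show ?thesis using False by (simp add: toP_def nth_default_def)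
qed

lemma toP_inj: "toP a = toP b \<Longrightarrow> a = b"
proof (rule bit_eqI)
  fix n assume "toP a = toP b"
  then have "coeff (toP a) n = coeff (toP b) n" by simp
  then show "bit a n = bit b n" by (cases "bit a n"; cases "bit b n") (simp_all add: coeff_toP)
qed

lemma toP_xor: "toP (xor a b) = toP a + toP b"
  by (rule poly_eqI) (simp add: coeff_toP bit_xor_iff)

lemma toP_0: "toP 0 = 0"
  by (rule poly_eqI) (simp add: coeff_toP)

lemma toP_eq_0: "toP a = 0 \<longleftrightarrow> a = 0"
  using toP_inj toP_0 by metis

lemma toP_pow: "toP (2^L) = monom 1 L"
  by (rule poly_eqI) (auto simp add: coeff_toP coeff_monom bit_exp_iff)

lemma bit_sum_pow: "finite S \<Longrightarrow> bit (\<Sum>i\<in>S. (2::nat)^i) j \<longleftrightarrow> j \<in> S"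
proof (induction S arbitrary: j rule: finite_induct)
  case empty then show ?case by simp
next
  case (insert x S)
  have nb: "\<not> bit (\<Sum>i\<in>S. (2::nat)^i) x" using insert.IH insert.hyps by simp
  have "(\<Sum>i\<in>insert x S. (2::nat)^i) = 2^x + (\<Sum>i\<in>S. 2^i)" using insert by simp
  also have "\<dots> = or (2^x) (\<Sum>i\<in>S. 2^i)"
    by (rule disjunctive_add_eq_or) (rule bit_eqI, use nb in \<open>auto simp: bit_and_iff bit_exp_iff\<close>)
  finally show ?case using insert.IH insert.hyps by (auto simp: bit_or_iff bit_exp_iff)
qed

lemma bit_clmul: "bit (clmul a b) i \<longleftrightarrow> odd (card {k. k \<le> i \<and> bit a (i - k) \<and> bit b k})"
proof -
  let ?P = "\<lambda>i. odd (card {k. k \<le> i \<and> bit a (i - k) \<and> bit b k})"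
  have "clmul a b = (\<Sum>i\<in>{i. i < Suc (a+b) \<and> ?P i}. 2^i)"
    unfolding clmul_def by (subst sum.inter_filter[symmetric]) (auto simp: Collect_conj_eq lessThan_def)
  then have "bit (clmul a b) i \<longleftrightarrow> i < Suc (a+b) \<and> ?P i" by (simp add: bit_sum_pow)
  moreover have "?P i \<Longrightarrow> i < Suc (a+b)"
  proof -
    assume "?P i"
    then have "{k. k \<le> i \<and> bit a (i - k) \<and> bit b k} \<noteq> {}" by (metis card.empty even_zero)
    then obtain k where "k \<le> i" "bit a (i-k)" "bit b k" by auto
    then show ?thesis using bit_imp_lt[of a "i-k"] bit_imp_lt[of b k] by linarith
  qed
  ultimately show ?thesis by blast
qed

lemma of_nat_bit: "(of_nat n :: bit) = of_bool (odd n)"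
  by (induction n) auto

lemma toP_clmul: "toP (clmul a b) = toP a * toP b"
proof (rule poly_eqI)
  fix i
  have "coeff (toP a * toP b) i = coeff (toP b * toP a) i" by (simp add: mult.commute)
  also have "\<dots> = (\<Sum>k\<le>i. of_bool (bit b k \<and> bit a (i - k)))"
    by (simp add: coeff_mult coeff_toP)
  also have "\<dots> = of_nat (card {k\<in>{..i}. bit b k \<and> bit a (i - k)})"
    by (simp add: sum.If_cases Int_def atMost_def)
  also have "{k\<in>{..i}. bit b k \<and> bit a (i - k)} = {k. k \<le> i \<and> bit a (i - k) \<and> bit b k}" by auto
  finally show "coeff (toP (clmul a b)) i = coeff (toP a * toP b) i"
    by (simp add: coeff_toP bit_clmul of_nat_bit)
qed

lemma toP_surj: "\<exists>n. toP n = q"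
proof (induction q rule: pCons_induct)
  case 0 then show ?case using toP_0 by blast
next
  case (pCons c p)
  then obtain n where n: "toP n = p" by blast
  have "toP (of_bool (c = 1) + 2*n) = pCons c p"
  proof (rule poly_eqI)
    fix i show "coeff (toP (of_bool (c = 1) + 2*n)) i = coeff (pCons c p) i"
    proof (cases i)
      case 0 then show ?thesis by (cases c) (auto simp: coeff_toP bit_0)
    next
      case (Suc j)
      have "(of_bool (c = 1) + 2*n) div 2 = n" by auto
      then show ?thesis using Suc by (simp add: n[symmetric] coeff_toP bit_Suc)
    qed
  qed
  then show ?case by blast
qed

lemma degree_toP: "a > 0 \<Longrightarrow> degree (toP a) = cl_degree a"
proof -
  assume "a > 0"
  then have nz: "toP a \<noteq> 0" using toP_eq_0 by simp
  have fin: "finite {i. bit a i}" using bit_imp_lt by (metis finite_nat_set_iff_bounded mem_Collect_eq)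
  have "coeff (toP a) (degree (toP a)) \<noteq> 0" using nz by simp
  then have b: "bit a (degree (toP a))" by (simp add: coeff_toP)
  have "cl_degree a \<in> {i. bit a i}" unfolding cl_degree_def using fin b by (intro Max_in) auto
  then have "degree (toP a) \<ge> cl_degree a" by (intro le_degree) (simp add: coeff_toP)
  moreover have "degree (toP a) \<le> cl_degree a" unfolding cl_degree_def using fin b by simp
  ultimately show ?thesis by simp
qed

lemma toP_cl_mod: assumes "b > 0" shows "toP (cl_mod a b) = toP a mod toP b"
proof -
  obtain q where q: "toP q = toP a div toP b" using toP_surj by blast
  obtain m where m: "toP m = toP a mod toP b" using toP_surj by blast
  have bnz: "toP b \<noteq> 0" using assms toP_eq_0 by simp
  have uniq: "toP \<beta> = toP a mod toP b" if h: "a = xor (clmul \<alpha> b) \<beta>" "\<beta> = 0 \<or> cl_degree \<beta> < cl_degree b" for \<alpha> \<beta>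
  proof -
    have "toP a = toP \<alpha> * toP b + toP \<beta>" using h(1) by (simp add: toP_xor toP_clmul)
    then have "toP a mod toP b = toP \<beta> mod toP b" by simp
    also have "\<dots> = toP \<beta>"
    proof (cases "\<beta> = 0")
      case True then show ?thesis by (simp add: toP_0)
    next
      case False
      then have "degree (toP \<beta>) < degree (toP b)" using h(2) degree_toP assms by simp
      then show ?thesis by (rule mod_poly_less)
    qed
    finally show ?thesis by simp
  qed
  have "a = xor (clmul q b) m"
    by (rule toP_inj) (simp add: toP_xor toP_clmul q m)
  moreover have "m = 0 \<or> cl_degree m < cl_degree b"
  proof (cases "m = 0")
    case False
    then have "toP a mod toP b \<noteq> 0" using m toP_eq_0 by metis
    then have "degree (toP m) < degree (toP b)" using m degree_mod_less' bnz by simp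
    then show ?thesis using False assms degree_toP by simp
  qed simp
  ultimately have "cl_mod a b = m" unfolding cl_mod_def
    by (rule_tac the_equality) (blast, metis uniq m toP_inj)
  then show ?thesis using m by simp
qed

lemma bitpoly_add_self: "(x::bit poly) + x = 0"
  by (rule poly_eqI) (subst coeff_add, simp)

theorem lemma8:
  fixes L r w :: nat
  assumes "L > 0" and "r > 0" and "cl_degree r < L" and "w > 0"
  shows "(cl_mod (clmul w (2 ^ L)) (xor (2 ^ L) r) = 0 \<or>
           cl_degree (cl_mod (clmul w (2 ^ L)) (xor (2 ^ L) r)) \<le> cl_degree w + cl_degree r)
       \<and> (cl_degree w + cl_degree r < L \<longrightarrow>
           cl_mod (clmul w (2 ^ L)) (xor (2 ^ L) r) \<noteq> 0 \<and>
           cl_degree (cl_mod (clmul w (2 ^ L)) (xor (2 ^ L) r)) = cl_degree w + cl_degree r)"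
proof -
  define c where "c = cl_mod (clmul w (2 ^ L)) (xor (2 ^ L) r)"
  define A where "A = toP w"
  define R where "R = toP r"
  define P where "P = monom (1::bit) L + R"
  have dR: "degree R = cl_degree r" using assms degree_toP R_def by simp
  have dA: "degree A = cl_degree w" using assms degree_toP A_def by simp
  have Anz: "A \<noteq> 0" "R \<noteq> 0" using assms toP_eq_0 A_def R_def by auto
  have dP: "degree P = L" unfolding P_def
    using dR assms(3) by (subst degree_add_eq_left) (auto simp: degree_monom_eq)
  have ppos: "xor (2 ^ L) r > 0"
  proof (rule ccontr)
    assume "\<not> xor (2 ^ L) r > 0"
    then have "toP (xor (2^L) r) = 0" using toP_0 by simp
    then have "P = 0" by (simp add: P_def R_def toP_xor toP_pow)
    then show False using dP assms(1) by simp
  qed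
  have "toP c = (A * monom 1 L) mod P"
    unfolding c_def using ppos by (simp add: toP_cl_mod toP_clmul toP_xor toP_pow A_def R_def P_def)
  also have "A * monom 1 L = A * R + A * P"
    unfolding P_def by (simp add: algebra_simps add.assoc[symmetric] bitpoly_add_self)
  also have "(A * R + A * P) mod P = (A * R) mod P" by simp
  finally have tc: "toP c = (A * R) mod P" .
  have dAR: "degree (A * R) = cl_degree w + cl_degree r" using Anz dA dR by (simp add: degree_mult_eq)
  have P1: "c = 0 \<or> cl_degree c \<le> cl_degree w + cl_degree r"
  proof (cases "c = 0")
    case False
    then have "toP c \<noteq> 0" using toP_eq_0 by metis
    have Pnz: "P \<noteq> 0" using dP assms(1) by auto
    have "degree (toP c) < L" using tc dP degree_mod_less'[OF Pnz] \<open>toP c \<noteq> 0\<close> by simp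
    moreover have "degree (toP c) = degree (A * R)" if "degree (A * R) < L"
      using tc that dP by (simp add: mod_poly_less)
    ultimately have "degree (toP c) \<le> degree (A * R)" by linarith
    then show ?thesis using False degree_toP dAR by simp
  qed simp
  have P2: "cl_degree w + cl_degree r < L \<Longrightarrow> c \<noteq> 0 \<and> cl_degree c = cl_degree w + cl_degree r"
  proof -
    assume h: "cl_degree w + cl_degree r < L"
    then have "toP c = A * R" using tc dAR dP by (simp add: mod_poly_less)
    then have "toP c \<noteq> 0" using Anz by simp
    then have "c \<noteq> 0" using toP_0 by metis
    then show ?thesis using \<open>toP c = A * R\<close> degree_toP dAR by (metis gr0I)
  qed
  show ?thesis using P1 P2 unfolding c_def by blast
qed

end
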